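(* Let $X$ be a subshift over a finite alphabet such that (i) there is $N$ such that every right special factor $w$ of $\mathcal{L}(X)$ with $|w|\ge N$ admits a letter $c$ such that $wc$ is right special in $\mathcal{L}(X)$; and (ii) right special words are dense in $X$: for every $\mathbf{x}\in X$ and every $n$, some right special factor of $\mathcal{L}(X)$ has $\mathbf{x}[0,n-1]$ as a prefix. Then the winning shift $W(X)$ has infinite coding dimension.
   Context: Subshifts are one-sided closed shift-invariant subsets of $A^{\mathbb{N}}$; $\mathcal{L}(X)$ is the set of finite factors of elements of $X$. A word $w\in\mathcal{L}(X)$ is right special if $wa,wb\in\mathcal{L}(X)$ for two distinct letters $a,b$. Winning shift: for a choice sequence $\alpha=\alpha_0\alpha_1\cdots\in\{0,\dots,|A|-1\}^{\mathbb{N}}$, Alice and Bob play infinitely many rounds; in round $j$ Alice chooses $A_j\subseteq A$ with $|A_j|=\alpha_j+1$ and Bob chooses $a_j\in A_j$; Alice wins if $a_0a_1\cdots\in X$. $W(X)$ is the set of $\alpha$ for which Alice has a winning strategy. Infinite coding dimension: there is no $d$ with $\sum_i y_i\le d$ for all $\mathbf{y}\in W(X)$. *)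

theory Defs
  imports Main
begin

text \<open>A subshift over the finite alphabet A: a nonempty set of A-valued sequences that is
closed in the product topology (written out via cylinders: a sequence all of whose prefixes
are prefixes of elements of X belongs to X) and invariant under the shift.\<close>
definition subshift :: "'a set \<Rightarrow> (nat \<Rightarrow> 'a) set \<Rightarrow> bool" where
  "subshift A X \<longleftrightarrow>
     finite A \<and> X \<noteq> {} \<and>
     (\<forall>x\<in>X. \<forall>i. x i \<in> A) \<and>
     (\<forall>x. (\<forall>n. \<exists>y\<in>X. \<forall>i<n. y i = x i) \<longrightarrow> x \<in> X) \<and>
     (\<forall>x\<in>X. (\<lambda>i. x (Suc i)) \<in> X)"

definition lang :: "(nat \<Rightarrow> 'a) set \<Rightarrow> 'a list set" where
  "lang X = {w. \<exists>x\<in>X. \<exists>k. w = map x [k..<k + length w]}"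

definition right_special :: "(nat \<Rightarrow> 'a) set \<Rightarrow> 'a list \<Rightarrow> bool" where
  "right_special X w \<longleftrightarrow> (\<exists>a b. a \<noteq> b \<and> w @ [a] \<in> lang X \<and> w @ [b] \<in> lang X)"

text \<open>Winning shift: alpha is a choice sequence with values in {0,...,|A|-1}; Alice's strategy
maps the history of Bob's previous letters to a subset of A of size alpha_j + 1; she wins
if every play consistent with her strategy lies in X.\<close>
definition winning_shift :: "'a set \<Rightarrow> (nat \<Rightarrow> 'a) set \<Rightarrow> (nat \<Rightarrow> nat) set" where
  "winning_shift A X =
     {\<alpha>. (\<forall>i. \<alpha> i < card A) \<and>
          (\<exists>\<sigma> :: 'a list \<Rightarrow> 'a set.
             (\<forall>h. \<sigma> h \<subseteq> A \<and> card (\<sigma> h) = \<alpha> (length h) + 1) \<and>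
             (\<forall>a. (\<forall>j. a j \<in> \<sigma> (map a [0..<j])) \<longrightarrow> a \<in> X))}"

text \<open>Infinite coding dimension: no d bounds the sums of all elements of W (sums of
nonnegative integers, expressed through partial sums).\<close>
definition infinite_coding_dimension :: "(nat \<Rightarrow> nat) set \<Rightarrow> bool" where
  "infinite_coding_dimension W \<longleftrightarrow> \<not> (\<exists>d::nat. \<forall>y\<in>W. \<forall>n. (\<Sum>i<n. y i) \<le> d)"

end

theory Submission
  imports Defs
begin

lemma shift_in:
  assumes "subshift A X" "x \<in> X"
  shows "(\<lambda>i. x (i + k)) \<in> X"
proof (induction k)
  case 0 then show ?case using assms by simp
next
  case (Suc k)
  then have "(\<lambda>i. (\<lambda>i. x (i + k)) (Suc i)) \<in> X" using assms(1) unfolding subshift_def by blast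
  then show ?case by simp
qed

lemma lang_iff:
  assumes "subshift A X"
  shows "w \<in> lang X \<longleftrightarrow> (\<exists>y\<in>X. map y [0..<length w] = w)"
proof
  assume "w \<in> lang X"
  then obtain x k where x: "x \<in> X" "w = map x [k..<k + length w]" unfolding lang_def by blast
  have "map (\<lambda>i. x (i + k)) [0..<length w] = map x [k..<k + length w]"
    by (rule nth_equalityI) (auto simp: add.commute)
  then have "map (\<lambda>i. x (i + k)) [0..<length w] = w" using x(2) by simp
  then show "\<exists>y\<in>X. map y [0..<length w] = w" using shift_in[OF assms x(1)] by blast
next
  assume "\<exists>y\<in>X. map y [0..<length w] = w"
  then obtain y where "y \<in> X" "map y [0..<length w] = w" by blast
  then show "w \<in> lang X" unfolding lang_def by (metis (mono_tags, lifting) add_0 mem_Collect_eq)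
qed

lemma lang_prefix:
  assumes "subshift A X" "u @ v \<in> lang X"
  shows "u \<in> lang X"
proof -
  obtain y where y: "y \<in> X" "map y [0..<length (u@v)] = u @ v" using assms lang_iff by blast
  have "map y [0..<length u] = u"
  proof -
    have "take (length u) (map y [0..<length (u@v)]) = u" using y(2) by simp
    then show ?thesis by (simp add: take_map)
  qed
  then show ?thesis using lang_iff[OF assms(1)] y(1) by blast
qed

lemma lang_ext:
  assumes "subshift A X" "u \<in> lang X"
  shows "\<exists>c. u @ [c] \<in> lang X"
proof -
  obtain y where y: "y \<in> X" "map y [0..<length u] = u" using assms lang_iff by blast
  have "map y [0..<length (u @ [y (length u)])] = u @ [y (length u)]" using y(2) by simp
  then show ?thesis using lang_iff[OF assms(1)] y(1) by blast
qed

lemma lang_letters: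
  assumes "subshift A X" "w \<in> lang X" "c \<in> set w"
  shows "c \<in> A"
proof -
  obtain x k where x: "x \<in> X" "w = map x [k..<k + length w]" using assms(2) unfolding lang_def by blast
  then obtain i where "c = x i" using assms(3) by (metis ex_map_conv)
  then show ?thesis using x(1) assms(1) unfolding subshift_def by blast
qed

lemma finite_bound:
  assumes "finite S" "\<forall>u\<in>S. \<exists>M::nat. \<forall>m\<ge>M. Q u m"
  shows "\<exists>M. \<forall>u\<in>S. \<forall>m\<ge>M. Q u m"
  using assms
proof (induction S rule: finite_induct)
  case empty then show ?case by simp
next
  case (insert x F)
  then obtain M1 where "\<forall>u\<in>F. \<forall>m\<ge>M1. Q u m" by auto
  moreover obtain M2 where "\<forall>m\<ge>M2. Q x m" using insert by auto
  ultimately show ?case by (intro exI[of _ "max M1 M2"]) auto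
qed

lemma sum_upd:
  assumes "(\<alpha>::nat\<Rightarrow>nat) M = 0" "M < m"
  shows "(\<Sum>i<m. (\<alpha>(M:=1)) i) = (\<Sum>i<m. \<alpha> i) + 1"
proof -
  have "\<alpha>(M:=1) = (\<lambda>i. \<alpha> i + (if i = M then 1 else 0))" using assms(1) by auto
  then have "(\<Sum>i<m. (\<alpha>(M:=1)) i) = (\<Sum>i<m. \<alpha> i) + (\<Sum>i<m. (if i = M then 1 else 0))"
    by (simp add: sum.distrib)
  also have "(\<Sum>i<m. (if i = M then 1 else 0::nat)) = 1" using assms(2) by (simp add: sum.delta)
  finally show ?thesis .
qed

theorem mainTheorem7:
  fixes A :: "'a set" and X :: "(nat \<Rightarrow> 'a) set"
  assumes "subshift A X"
    and "\<exists>N. \<forall>w. right_special X w \<and> length w \<ge> N \<longrightarrow> (\<exists>c. right_special X (w @ [c]))"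
    and "\<forall>x\<in>X. \<forall>n. \<exists>w. right_special X w \<and> (\<exists>v. w = map x [0..<n] @ v)"
  shows "infinite_coding_dimension (winning_shift A X)"
proof -
  note ss = assms(1)
  obtain N where N: "\<And>w. right_special X w \<Longrightarrow> length w \<ge> N \<Longrightarrow> \<exists>c. right_special X (w @ [c])"
    using assms(2) by blast
  define good where "good w \<longleftrightarrow> right_special X w \<and> length w \<ge> N" for w
  have good_lang: "w \<in> lang X" if "good w" for w
    using that lang_prefix[OF ss] unfolding good_def right_special_def by blast
  have good_ext: "\<exists>v. length v = k \<and> good (w @ v)" if "good w" for w k
  proof (induction k)
    case 0 then show ?case using that by simp
  next
    case (Suc k)
    then obtain v where v: "length v = k" "good (w @ v)" by blast
    then obtain c where "right_special X (w @ v @ [c])" using N unfolding good_def by fastforce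
    moreover have "length (w @ v @ [c]) \<ge> N" using v(2) unfolding good_def by simp
    ultimately show ?case using v(1) unfolding good_def by (intro exI[of _ "v @ [c]"]) auto
  qed
  have dense: "\<exists>v. good (u @ v)" if uL: "u \<in> lang X" for u
  proof -
    obtain y where y: "y \<in> X" "map y [0..<length u] = u" using uL lang_iff[OF ss, of u] by auto
    have e: "\<exists>w. right_special X w \<and> (\<exists>v. w = map y [0..<length u + N] @ v)"
      using assms(3) y(1) by simp
    then obtain w where w1: "right_special X w" "\<exists>v. w = map y [0..<length u + N] @ v"
      by (elim exE conjE) simp
    then obtain v where "w = map y [0..<length u + N] @ v" by (elim exE) simp
    note w = w1(1) this
    have "map y [0..<length u + N] = u @ map y [length u..<length u + N]"
      using y(2) by (simp add: upt_add_eq_append[of 0 "length u" N])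
    then have "w = u @ (map y [length u..<length u + N] @ v)" using w(2) by simp
    moreover have "length w \<ge> N" using w(2) by simp
    ultimately show ?thesis using w(1) unfolding good_def by blast
  qed
  have allM: "\<exists>M. \<forall>m\<ge>M. \<exists>v. good (u @ v) \<and> length (u @ v) = m" if uL: "u \<in> lang X" for u
  proof -
    obtain v0 where v0: "good (u @ v0)" using dense uL by blast
    show ?thesis
    proof (intro exI[of _ "length (u @ v0)"] allI impI)
      fix m assume "m \<ge> length (u @ v0)"
      then obtain v where "length v = m - length (u @ v0)" "good ((u @ v0) @ v)"
        using good_ext[OF v0] by blast
      then show "\<exists>v. good (u @ v) \<and> length (u @ v) = m"
        using \<open>m \<ge> length (u @ v0)\<close> by (intro exI[of _ "v0 @ v"]) auto
    qed
  qed
  have Q: "\<forall>L S. finite S \<longrightarrow> S \<subseteq> lang X \<longrightarrow> (\<forall>u\<in>S. length u = L) \<longrightarrow>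
     (\<exists>(\<alpha>::nat\<Rightarrow>nat) R n. S \<subseteq> R \<and> R \<subseteq> lang X \<and> (\<forall>h\<in>R. length h \<ge> L) \<and> (\<forall>j. \<alpha> j \<le> 1) \<and>
        (\<forall>j<L. \<alpha> j = 0) \<and>
        (\<forall>h\<in>R. \<exists>a b. (\<alpha> (length h) = 1 \<longrightarrow> a \<noteq> b) \<and> h @ [a] \<in> R \<and> h @ [b] \<in> R) \<and>
        d \<le> (\<Sum>i<n. \<alpha> i))" for d
  proof (induction d)
    case 0
    show ?case
    proof (intro allI impI)
      fix L S assume S: "finite S" "S \<subseteq> lang X" "\<forall>u\<in>S. length u = L"
      let ?R = "{h \<in> lang X. length h \<ge> L}"
      have "\<forall>h\<in>?R. \<exists>a b. ((\<lambda>_. 0::nat) (length h) = 1 \<longrightarrow> a \<noteq> b) \<and> h @ [a] \<in> ?R \<and> h @ [b] \<in> ?R"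
        using lang_ext[OF ss] by fastforce
      then show "\<exists>(\<alpha>::nat\<Rightarrow>nat) R n. S \<subseteq> R \<and> R \<subseteq> lang X \<and> (\<forall>h\<in>R. length h \<ge> L) \<and> (\<forall>j. \<alpha> j \<le> 1) \<and>
        (\<forall>j<L. \<alpha> j = 0) \<and>
        (\<forall>h\<in>R. \<exists>a b. (\<alpha> (length h) = 1 \<longrightarrow> a \<noteq> b) \<and> h @ [a] \<in> R \<and> h @ [b] \<in> R) \<and>
        0 \<le> (\<Sum>i<n. \<alpha> i)"
        using S by (intro exI[of _ "\<lambda>_. 0"] exI[of _ ?R] exI[of _ 0]) auto
    qed
  next
    case (Suc d)
    show ?case
    proof (intro allI impI)
      fix L S assume S: "finite S" "S \<subseteq> lang X" "\<forall>u\<in>S. length u = L"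
      obtain M0 where M0: "\<forall>u\<in>S. \<forall>m\<ge>M0. \<exists>v. good (u @ v) \<and> length (u @ v) = m"
        using finite_bound[OF S(1), of "\<lambda>u m. \<exists>v. good (u @ v) \<and> length (u @ v) = m"] allM S(2)
        by blast
      define M where "M = max M0 L"
      have "\<forall>u\<in>S. \<exists>p. take L (fst p) = u \<and> length (fst p) = M \<and> fst (snd p) \<noteq> snd (snd p) \<and>
              fst p @ [fst (snd p)] \<in> lang X \<and> fst p @ [snd (snd p)] \<in> lang X"
      proof
        fix u assume u: "u \<in> S"
        then obtain v where v: "good (u @ v)" "length (u @ v) = M" using M0 u unfolding M_def by (meson max.cobounded1)
        then obtain a b where "a \<noteq> b" "(u @ v) @ [a] \<in> lang X" "(u @ v) @ [b] \<in> lang X"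
          unfolding good_def right_special_def by blast
        then show "\<exists>p. take L (fst p) = u \<and> length (fst p) = M \<and> fst (snd p) \<noteq> snd (snd p) \<and>
              fst p @ [fst (snd p)] \<in> lang X \<and> fst p @ [snd (snd p)] \<in> lang X"
          using u S(3) v(2) by (intro exI[of _ "(u @ v, a, b)"]) auto
      qed
      then obtain f where f: "\<forall>u\<in>S. take L (fst (f u)) = u \<and> length (fst (f u)) = M \<and>
          fst (snd (f u)) \<noteq> snd (snd (f u)) \<and>
          fst (f u) @ [fst (snd (f u))] \<in> lang X \<and> fst (f u) @ [snd (snd (f u))] \<in> lang X"
        by metis
      define g where "g u = fst (f u)" for u
      define ga where "ga u = fst (snd (f u))" for u
      define gb where "gb u = snd (snd (f u))" for u
      have gS: "take L (g u) = u" "length (g u) = M" "ga u \<noteq> gb u"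
        "g u @ [ga u] \<in> lang X" "g u @ [gb u] \<in> lang X" if "u \<in> S" for u
        using f that unfolding g_def ga_def gb_def by auto
      define S' where "S' = (\<lambda>u. g u @ [ga u]) ` S \<union> (\<lambda>u. g u @ [gb u]) ` S"
      have S': "finite S'" "S' \<subseteq> lang X" "\<forall>u\<in>S'. length u = Suc M"
        unfolding S'_def using S(1) gS by auto
      from Suc.IH[rule_format, OF S'(1) S'(2) bspec[OF S'(3)]] obtain \<alpha> R n where IH: "S' \<subseteq> R" "R \<subseteq> lang X" "\<forall>h\<in>R. length h \<ge> Suc M" "\<forall>j. \<alpha> j \<le> 1"
        "\<forall>j<Suc M. \<alpha> j = 0"
        "\<forall>h\<in>R. \<exists>a b. (\<alpha> (length h) = 1 \<longrightarrow> a \<noteq> b) \<and> h @ [a] \<in> R \<and> h @ [b] \<in> R"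
        "d \<le> (\<Sum>i<n. \<alpha> i)"
        by blast
      define P where "P = {take k (g u) | u k. u \<in> S \<and> L \<le> k \<and> k \<le> M}"
      define R2 where "R2 = R \<union> P"
      define \<beta> where "\<beta> = \<alpha>(M := 1)"
      define n2 where "n2 = max n (Suc M)"
      have gl: "g u \<in> lang X" if "u \<in> S" for u using gS(4)[OF that] lang_prefix[OF ss] by blast
      have c1: "S \<subseteq> R2"
      proof
        fix u assume "u \<in> S"
        then have "u = take L (g u)" "L \<le> M" using gS unfolding M_def by auto
        then show "u \<in> R2" unfolding R2_def P_def using \<open>u \<in> S\<close> by blast
      qed
      have c2: "R2 \<subseteq> lang X"
      proof -
        have "take k (g u) \<in> lang X" if "u \<in> S" for u k
          using gl[OF that] lang_prefix[OF ss, of "take k (g u)" "drop k (g u)"] by simp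
        then show ?thesis unfolding R2_def P_def using IH(2) by blast
      qed
      have c3: "\<forall>h\<in>R2. length h \<ge> L"
        using IH(3) gS(2) unfolding R2_def P_def M_def by fastforce
      have c4: "\<forall>j. \<beta> j \<le> 1" using IH(4) unfolding \<beta>_def by simp
      have c5: "\<forall>j<L. \<beta> j = 0" using IH(5) unfolding \<beta>_def M_def by auto
      have c6: "\<forall>h\<in>R2. \<exists>a b. (\<beta> (length h) = 1 \<longrightarrow> a \<noteq> b) \<and> h @ [a] \<in> R2 \<and> h @ [b] \<in> R2"
      proof
        fix h assume "h \<in> R2"
        then consider "h \<in> R" | u k where "u \<in> S" "L \<le> k" "k \<le> M" "h = take k (g u)"
          unfolding R2_def P_def by blast
        then show "\<exists>a b. (\<beta> (length h) = 1 \<longrightarrow> a \<noteq> b) \<and> h @ [a] \<in> R2 \<and> h @ [b] \<in> R2"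
        proof cases
          case 1
          then have "length h \<noteq> M" using IH(3) by fastforce
          moreover obtain a b where "(\<alpha> (length h) = 1 \<longrightarrow> a \<noteq> b)" "h @ [a] \<in> R" "h @ [b] \<in> R"
            using IH(6) 1 by blast
          ultimately show ?thesis unfolding \<beta>_def R2_def by auto
        next
          case (2 u k)
          show ?thesis
          proof (cases "k = M")
            case True
            then have "h = g u" using 2 gS(2) by simp
            moreover have "g u @ [ga u] \<in> R2" "g u @ [gb u] \<in> R2"
              using IH(1) 2(1) unfolding R2_def S'_def by auto
            ultimately show ?thesis using gS(3)[OF 2(1)] by blast
          next
            case False
            then have k: "k < M" using 2 by simp
            then have "take (Suc k) (g u) = h @ [g u ! k]" using 2 gS(2)
              by (simp add: take_Suc_conv_app_nth)
            moreover have "take (Suc k) (g u) \<in> P"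
              unfolding P_def using 2 k by (intro CollectI exI[of _ u] exI[of _ "Suc k"]) auto
            then have "take (Suc k) (g u) \<in> R2" unfolding R2_def by blast
            moreover have "\<beta> (length h) = 0" using 2 gS(2) k IH(5) unfolding \<beta>_def by simp
            ultimately show ?thesis by auto
          qed
        qed
      qed
      have c7: "Suc d \<le> (\<Sum>i<n2. \<beta> i)"
      proof -
        have "(\<Sum>i<n. \<alpha> i) \<le> (\<Sum>i<n2. \<alpha> i)" unfolding n2_def by (intro sum_mono2) auto
        moreover have "(\<Sum>i<n2. \<beta> i) = (\<Sum>i<n2. \<alpha> i) + 1"
          unfolding \<beta>_def by (rule sum_upd) (use IH(5) n2_def in auto)
        ultimately show ?thesis using IH(7) by simp
      qed
      show "\<exists>(\<alpha>::nat\<Rightarrow>nat) R n. S \<subseteq> R \<and> R \<subseteq> lang X \<and> (\<forall>h\<in>R. length h \<ge> L) \<and> (\<forall>j. \<alpha> j \<le> 1) \<and>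
        (\<forall>j<L. \<alpha> j = 0) \<and>
        (\<forall>h\<in>R. \<exists>a b. (\<alpha> (length h) = 1 \<longrightarrow> a \<noteq> b) \<and> h @ [a] \<in> R \<and> h @ [b] \<in> R) \<and>
        Suc d \<le> (\<Sum>i<n. \<alpha> i)"
        using c1 c2 c3 c4 c5 c6 c7 by blast
    qed
  qed
  have finA: "finite A" using ss unfolding subshift_def by blast
  have cardA: "card A \<ge> 2"
  proof -
    obtain x where "x \<in> X" using ss unfolding subshift_def by blast
    then obtain w where "right_special X w" using assms(3) by blast
    then obtain a b where ab: "a \<noteq> b" "w @ [a] \<in> lang X" "w @ [b] \<in> lang X"
      unfolding right_special_def by blast
    have "a \<in> A" "b \<in> A" using lang_letters[OF ss ab(2)] lang_letters[OF ss ab(3)] by auto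
    then have "{a, b} \<subseteq> A" by blast
    then have "card {a, b} \<le> card A" using finA by (rule card_mono[rotated])
    then show ?thesis using ab(1) by simp
  qed
  have nil: "[] \<in> lang X"
  proof -
    obtain x where "x \<in> X" using ss unfolding subshift_def by blast
    then show ?thesis unfolding lang_def by force
  qed
  show ?thesis
    unfolding infinite_coding_dimension_def
  proof
    assume "\<exists>d::nat. \<forall>y\<in>winning_shift A X. \<forall>n. (\<Sum>i<n. y i) \<le> d"
    then obtain d where d: "\<forall>y\<in>winning_shift A X. \<forall>n. (\<Sum>i<n. y i) \<le> d" by blast
    obtain \<alpha> R n where Q0: "{[]} \<subseteq> R" "R \<subseteq> lang X" "\<forall>j. \<alpha> j \<le> 1"
        "\<forall>h\<in>R. \<exists>a b. (\<alpha> (length h) = 1 \<longrightarrow> a \<noteq> b) \<and> h @ [a] \<in> R \<and> h @ [b] \<in> R"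
        "Suc d \<le> (\<Sum>i<n. \<alpha> i)"
      using Q[of "Suc d", rule_format, of "{[]}" 0] nil by auto
    have "\<forall>h\<in>R. \<exists>p. (\<alpha> (length h) = 1 \<longrightarrow> fst p \<noteq> snd p) \<and> h @ [fst p] \<in> R \<and> h @ [snd p] \<in> R"
      using Q0(4) by auto
    then obtain ab where ab: "\<forall>h\<in>R. (\<alpha> (length h) = 1 \<longrightarrow> fst (ab h) \<noteq> snd (ab h)) \<and>
        h @ [fst (ab h)] \<in> R \<and> h @ [snd (ab h)] \<in> R"
      by (metis (no_types, lifting) bchoice)
    define \<sigma> where "\<sigma> h = (if h \<in> R then (if \<alpha> (length h) = 1 then {fst (ab h), snd (ab h)} else {fst (ab h)})
       else (SOME B. B \<subseteq> A \<and> card B = \<alpha> (length h) + 1))" for h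
    have lt: "\<alpha> i < card A" for i using Q0(3)[rule_format, of i] cardA by linarith
    have sig: "\<sigma> h \<subseteq> A \<and> card (\<sigma> h) = \<alpha> (length h) + 1" for h
    proof (cases "h \<in> R")
      case True
      have l1: "fst (ab h) \<in> A" using ab True Q0(2) lang_letters[OF ss] by fastforce
      have l2: "snd (ab h) \<in> A" using ab True Q0(2) lang_letters[OF ss] by fastforce
      show ?thesis
      proof (cases "\<alpha> (length h) = 1")
        case True
        then show ?thesis using l1 l2 ab \<open>h \<in> R\<close> unfolding \<sigma>_def by auto
      next
        case False
        then have "\<alpha> (length h) = 0" using Q0(3) le_Suc_eq by (metis One_nat_def le_zero_eq)
        then show ?thesis using l1 False \<open>h \<in> R\<close> unfolding \<sigma>_def by auto
      qed
    next
      case False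
      have "\<alpha> (length h) + 1 \<le> card A" using lt[of "length h"] by simp
      then obtain T where "T \<subseteq> A" "card T = \<alpha> (length h) + 1"
        by (rule obtain_subset_with_card_n)
      then have "\<exists>B. B \<subseteq> A \<and> card B = \<alpha> (length h) + 1" by blast
      from someI_ex[OF this] have "(SOME B. B \<subseteq> A \<and> card B = \<alpha> (length h) + 1) \<subseteq> A \<and>
          card (SOME B. B \<subseteq> A \<and> card B = \<alpha> (length h) + 1) = \<alpha> (length h) + 1" .
      moreover have "\<sigma> h = (SOME B. B \<subseteq> A \<and> card B = \<alpha> (length h) + 1)"
        using False unfolding \<sigma>_def by simp
      ultimately show ?thesis by simp
    qed
    have win: "a \<in> X" if a: "\<forall>j. a j \<in> \<sigma> (map a [0..<j])" for a
    proof -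
      have inR: "map a [0..<k] \<in> R" for k
      proof (induction k)
        case 0 then show ?case using Q0(1) by simp
      next
        case (Suc k)
        have "a k \<in> \<sigma> (map a [0..<k])" using a by blast
        then have "a k = fst (ab (map a [0..<k])) \<or> a k = snd (ab (map a [0..<k]))"
          using Suc unfolding \<sigma>_def by (auto split: if_splits)
        then have "map a [0..<k] @ [a k] \<in> R" using ab Suc by auto
        then show ?case by simp
      qed
      have "\<forall>k. \<exists>y\<in>X. \<forall>i<k. y i = a i"
      proof
        fix k
        have "map a [0..<k] \<in> lang X" using inR Q0(2) by blast
        then obtain y where "y \<in> X" "map y [0..<k] = map a [0..<k]"
          using lang_iff[OF ss, of "map a [0..<k]"] by auto
        then show "\<exists>y\<in>X. \<forall>i<k. y i = a i" using map_eq_conv by fastforce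
      qed
      then show ?thesis using ss unfolding subshift_def by blast
    qed
    have "\<alpha> \<in> winning_shift A X"
      unfolding winning_shift_def using lt sig win by blast
    then have "(\<Sum>i<n. \<alpha> i) \<le> d" using d by blast
    then show False using Q0(5) by simp
  qed
qed

end
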